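(* Let $G$ and $H$ be finite groups, $\varphi:H\to G$ a group homomorphism, and $X$ a smooth projective complex $G$-variety, regarded as an $H$-variety via $\varphi$. Then the kernel of the induced homomorphism $\operatorname{Am}(X,G)\to\operatorname{Am}(X,H)$ is the set of classes $\partial_G[\mathcal{L}]$ where $\mathcal{L}$ is a $G$-invariant line bundle on $X$ such that $\varphi$ factors through the projection $G_{\mathcal{L}}\to G$ (i.e. there is a homomorphism $\psi:H\to G_{\mathcal{L}}$ whose composite with $G_{\mathcal{L}}\to G$ equals $\varphi$).
   Context: Actions need not be faithful. For a $G$-invariant line bundle $\mathcal{L}$, the lifting group $G_{\mathcal{L}}$ is the group of all isomorphisms of the total space of $\mathcal{L}$, linear on fibers, lifting some element of $G$; it is a central extension $1\to\mathbb{C}^\times\to G_{\mathcal{L}}\to G\to1$ with class $\partial_G[\mathcal{L}]\in H^2(G,\mathbb{C}^\times)$. $\operatorname{Am}(X,G):=\partial_G(\operatorname{Pic}(X)^G)$. The induced homomorphism $\operatorname{Am}(X,G)\to\operatorname{Am}(X,H)$ is the restriction of $\varphi^\ast:H^2(G,\mathbb{C}^\times)\to H^2(H,\mathbb{C}^\times)$ (pullback of extensions along $\varphi$), sending $\partial_G[\mathcal{L}]$ to $\partial_H[\mathcal{L}]$. *)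

theory Defs
  imports Complex_Main "HOL-Algebra.Group"
begin

text \<open>Group cohomology H^2(G, C^x) with trivial action, via normalised-free
  2-cocycles modulo coboundaries.\<close>

definition cocycle2 :: "('g, 'm) monoid_scheme \<Rightarrow> ('g \<Rightarrow> 'g \<Rightarrow> complex) \<Rightarrow> bool" where
  "cocycle2 G c \<longleftrightarrow>
     (\<forall>x\<in>carrier G. \<forall>y\<in>carrier G. c x y \<noteq> 0) \<and>
     (\<forall>x\<in>carrier G. \<forall>y\<in>carrier G. \<forall>z\<in>carrier G.
        c x y * c (x \<otimes>\<^bsub>G\<^esub> y) z = c y z * c x (y \<otimes>\<^bsub>G\<^esub> z))"

definition cohomologous :: "('g, 'm) monoid_scheme \<Rightarrow> ('g \<Rightarrow> 'g \<Rightarrow> complex) \<Rightarrow> ('g \<Rightarrow> 'g \<Rightarrow> complex) \<Rightarrow> bool" where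
  "cohomologous G c d \<longleftrightarrow>
     (\<exists>f. (\<forall>x\<in>carrier G. f x \<noteq> 0) \<and>
          (\<forall>x\<in>carrier G. \<forall>y\<in>carrier G. d x y = c x y * f x * f y / f (x \<otimes>\<^bsub>G\<^esub> y)))"

definition H2class :: "('g, 'm) monoid_scheme \<Rightarrow> ('g \<Rightarrow> 'g \<Rightarrow> complex) \<Rightarrow> ('g \<Rightarrow> 'g \<Rightarrow> complex) set" where
  "H2class G c = {d. cocycle2 G d \<and> cohomologous G c d}"

definition pullback2 :: "('h \<Rightarrow> 'g) \<Rightarrow> ('g \<Rightarrow> 'g \<Rightarrow> complex) \<Rightarrow> ('h \<Rightarrow> 'h \<Rightarrow> complex)" where
  "pullback2 \<phi> c = (\<lambda>x y. c (\<phi> x) (\<phi> y))"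

definition H2pull :: "('h, 'n) monoid_scheme \<Rightarrow> ('h \<Rightarrow> 'g) \<Rightarrow> ('g \<Rightarrow> 'g \<Rightarrow> complex) set \<Rightarrow> ('h \<Rightarrow> 'h \<Rightarrow> complex) set" where
  "H2pull H \<phi> x = H2class H (pullback2 \<phi> (SOME c. c \<in> x))"

text \<open>Am(X,G) = \<partial>_G(Pic(X)^G): the classes of the cocycles in S, where S is the
  set of cocycles representing \<partial>_G[L] for the G-invariant line bundles L.\<close>
definition Am :: "('g, 'm) monoid_scheme \<Rightarrow> ('g \<Rightarrow> 'g \<Rightarrow> complex) set \<Rightarrow> ('g \<Rightarrow> 'g \<Rightarrow> complex) set set" where
  "Am G S = H2class G ` S"

text \<open>The central extension 1 \<rightarrow> C^x \<rightarrow> G_c \<rightarrow> G \<rightarrow> 1 of class [c]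
  (the lifting group), projection = fst.\<close>
definition twisted_ext :: "('g, 'm) monoid_scheme \<Rightarrow> ('g \<Rightarrow> 'g \<Rightarrow> complex) \<Rightarrow> ('g \<times> complex) monoid" where
  "twisted_ext G c =
     \<lparr>carrier = carrier G \<times> {z. z \<noteq> 0},
      mult = (\<lambda>(g, a) (h, b). (g \<otimes>\<^bsub>G\<^esub> h, a * b * c g h)),
      one = (\<one>\<^bsub>G\<^esub>, 1 / c \<one>\<^bsub>G\<^esub> \<one>\<^bsub>G\<^esub>)\<rparr>"

end

theory Submission
  imports Defs
begin

lemma cohom_refl: "cohomologous G c c"
  unfolding cohomologous_def by (rule exI[of _ "\<lambda>_. 1"]) simp

lemma cohom_sym:
  assumes "group G" "cohomologous G c d"
  shows "cohomologous G d c"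
proof -
  obtain f where f: "\<forall>x\<in>carrier G. f x \<noteq> 0"
    "\<forall>x\<in>carrier G. \<forall>y\<in>carrier G. d x y = c x y * f x * f y / f (x \<otimes>\<^bsub>G\<^esub> y)"
    using assms(2) unfolding cohomologous_def by blast
  show ?thesis unfolding cohomologous_def
  proof (rule exI[of _ "\<lambda>x. 1 / f x"], intro conjI ballI)
    fix x assume "x \<in> carrier G" then show "1 / f x \<noteq> 0" using f by simp
  next
    fix x y assume xy: "x \<in> carrier G" "y \<in> carrier G"
    then have "x \<otimes>\<^bsub>G\<^esub> y \<in> carrier G" using assms(1) by (simp add: group.is_monoid monoid.m_closed)
    then have nz: "f x \<noteq> 0" "f y \<noteq> 0" "f (x \<otimes>\<^bsub>G\<^esub> y) \<noteq> 0" using f xy by auto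
    show "c x y = d x y * (1 / f x) * (1 / f y) / (1 / f (x \<otimes>\<^bsub>G\<^esub> y))"
      using f(2) xy nz by (simp add: field_simps)
  qed
qed

lemma cohom_trans:
  assumes "group G" "cohomologous G c d" "cohomologous G d e"
  shows "cohomologous G c e"
proof -
  obtain f where f: "\<forall>x\<in>carrier G. f x \<noteq> 0"
    "\<forall>x\<in>carrier G. \<forall>y\<in>carrier G. d x y = c x y * f x * f y / f (x \<otimes>\<^bsub>G\<^esub> y)"
    using assms(2) unfolding cohomologous_def by blast
  obtain g where g: "\<forall>x\<in>carrier G. g x \<noteq> 0"
    "\<forall>x\<in>carrier G. \<forall>y\<in>carrier G. e x y = d x y * g x * g y / g (x \<otimes>\<^bsub>G\<^esub> y)"
    using assms(3) unfolding cohomologous_def by blast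
  show ?thesis unfolding cohomologous_def
  proof (rule exI[of _ "\<lambda>x. f x * g x"], intro conjI ballI)
    fix x assume "x \<in> carrier G" then show "f x * g x \<noteq> 0" using f g by simp
  next
    fix x y assume xy: "x \<in> carrier G" "y \<in> carrier G"
    then have "x \<otimes>\<^bsub>G\<^esub> y \<in> carrier G" using assms(1) by (simp add: group.is_monoid monoid.m_closed)
    then have nz: "f (x \<otimes>\<^bsub>G\<^esub> y) \<noteq> 0" "g (x \<otimes>\<^bsub>G\<^esub> y) \<noteq> 0" using f g xy by auto
    show "e x y = c x y * (f x * g x) * (f y * g y) / (f (x \<otimes>\<^bsub>G\<^esub> y) * g (x \<otimes>\<^bsub>G\<^esub> y))"
      using f(2) g(2) xy nz by (simp add: field_simps)
  qed
qed

lemma cohom_pull: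
  assumes "\<phi> \<in> hom H G" "cohomologous G c d"
  shows "cohomologous H (pullback2 \<phi> c) (pullback2 \<phi> d)"
proof -
  obtain f where f: "\<forall>x\<in>carrier G. f x \<noteq> 0"
    "\<forall>x\<in>carrier G. \<forall>y\<in>carrier G. d x y = c x y * f x * f y / f (x \<otimes>\<^bsub>G\<^esub> y)"
    using assms(2) unfolding cohomologous_def by blast
  show ?thesis unfolding cohomologous_def
  proof (rule exI[of _ "\<lambda>x. f (\<phi> x)"], intro conjI ballI)
    fix x assume "x \<in> carrier H" then show "f (\<phi> x) \<noteq> 0" using f assms(1) hom_in_carrier by metis
  next
    fix x y assume xy: "x \<in> carrier H" "y \<in> carrier H"
    then show "pullback2 \<phi> d x y = pullback2 \<phi> c x y * f (\<phi> x) * f (\<phi> y) / f (\<phi> (x \<otimes>\<^bsub>H\<^esub> y))"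
      using f(2) assms(1) hom_in_carrier[OF assms(1)] hom_mult[OF assms(1)] by (simp add: pullback2_def)
  qed
qed

lemma cocycle_pull:
  assumes "\<phi> \<in> hom H G" "cocycle2 G c"
  shows "cocycle2 H (pullback2 \<phi> c)"
  using assms hom_in_carrier[OF assms(1)] hom_mult[OF assms(1)]
  unfolding cocycle2_def pullback2_def by (auto simp: group.is_monoid monoid.m_closed)

lemma cocycle_one: "cocycle2 H (\<lambda>_ _. 1)"
  unfolding cocycle2_def by simp

lemma class_eq_iff:
  assumes "group H" "cocycle2 H e" "cocycle2 H e'"
  shows "H2class H e = H2class H e' \<longleftrightarrow> cohomologous H e e'"
proof
  assume "H2class H e = H2class H e'"
  moreover have "e' \<in> H2class H e'" using assms cohom_refl unfolding H2class_def by blast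
  ultimately show "cohomologous H e e'" unfolding H2class_def by blast
next
  assume a: "cohomologous H e e'"
  show "H2class H e = H2class H e'" unfolding H2class_def
    using a cohom_sym[OF assms(1)] cohom_trans[OF assms(1)] by blast
qed

theorem proposition2p13:
  fixes G :: "('g, 'a) monoid_scheme" and H :: "('h, 'b) monoid_scheme"
    and \<phi> :: "'h \<Rightarrow> 'g" and S :: "('g \<Rightarrow> 'g \<Rightarrow> complex) set"
  assumes "group G" and "group H"
    and "finite (carrier G)" and "finite (carrier H)"
    and "\<phi> \<in> hom H G"
    and "\<forall>c\<in>S. cocycle2 G c"
  shows "{x \<in> Am G S. H2pull H \<phi> x = H2class H (\<lambda>_ _. 1)} =
         {H2class G c | c. c \<in> S \<and>
            (\<exists>\<psi> \<in> hom H (twisted_ext G c). \<forall>h\<in>carrier H. fst (\<psi> h) = \<phi> h)}"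
proof -
  have key: "H2pull H \<phi> (H2class G c) = H2class H (\<lambda>_ _. 1) \<longleftrightarrow>
      cohomologous H (\<lambda>_ _. 1) (pullback2 \<phi> c)" if c: "cocycle2 G c" for c
  proof -
    have "c \<in> H2class G c" using c cohom_refl unfolding H2class_def by blast
    then have d: "(SOME d. d \<in> H2class G c) \<in> H2class G c" by (rule someI[where P="\<lambda>d. d \<in> H2class G c"])
    define d where "d = (SOME d. d \<in> H2class G c)"
    have dc: "cocycle2 G d" "cohomologous G c d" using d unfolding d_def H2class_def by auto
    have pcd: "cohomologous H (pullback2 \<phi> c) (pullback2 \<phi> d)"
      using cohom_pull[OF assms(5) dc(2)] .
    have "H2pull H \<phi> (H2class G c) = H2class H (pullback2 \<phi> d)"
      unfolding H2pull_def d_def ..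
    also have "\<dots> = H2class H (\<lambda>_ _. 1) \<longleftrightarrow> cohomologous H (pullback2 \<phi> d) (\<lambda>_ _. 1)"
      using class_eq_iff[OF assms(2) cocycle_pull[OF assms(5) dc(1)] cocycle_one] by simp
    also have "\<dots> \<longleftrightarrow> cohomologous H (\<lambda>_ _. 1) (pullback2 \<phi> c)"
      using pcd cohom_sym[OF assms(2)] cohom_trans[OF assms(2)] by metis
    finally show ?thesis .
  qed
  have lift: "cohomologous H (\<lambda>_ _. 1) (pullback2 \<phi> c) \<longleftrightarrow>
      (\<exists>\<psi> \<in> hom H (twisted_ext G c). \<forall>h\<in>carrier H. fst (\<psi> h) = \<phi> h)" for c
  proof
    assume "cohomologous H (\<lambda>_ _. 1) (pullback2 \<phi> c)"
    then obtain f where f: "\<forall>x\<in>carrier H. f x \<noteq> 0"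
      "\<forall>x\<in>carrier H. \<forall>y\<in>carrier H. c (\<phi> x) (\<phi> y) = f x * f y / f (x \<otimes>\<^bsub>H\<^esub> y)"
      unfolding cohomologous_def pullback2_def by auto
    have "(\<lambda>h. (\<phi> h, 1 / f h)) \<in> hom H (twisted_ext G c)"
      unfolding hom_def
    proof (intro CollectI conjI Pi_I ballI)
      fix x assume "x \<in> carrier H"
      then show "(\<phi> x, 1 / f x) \<in> carrier (twisted_ext G c)"
        using f hom_in_carrier[OF assms(5)] by (simp add: twisted_ext_def)
    next
      fix x y assume xy: "x \<in> carrier H" "y \<in> carrier H"
      then have "x \<otimes>\<^bsub>H\<^esub> y \<in> carrier H" using assms(2) by (simp add: group.is_monoid monoid.m_closed)
      then have nz: "f x \<noteq> 0" "f y \<noteq> 0" "f (x \<otimes>\<^bsub>H\<^esub> y) \<noteq> 0" using f xy by auto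
      show "(\<phi> (x \<otimes>\<^bsub>H\<^esub> y), 1 / f (x \<otimes>\<^bsub>H\<^esub> y)) =
          (\<phi> x, 1 / f x) \<otimes>\<^bsub>twisted_ext G c\<^esub> (\<phi> y, 1 / f y)"
        using f(2) xy nz hom_mult[OF assms(5) xy] by (simp add: twisted_ext_def)
    qed
    then show "\<exists>\<psi> \<in> hom H (twisted_ext G c). \<forall>h\<in>carrier H. fst (\<psi> h) = \<phi> h" by force
  next
    assume "\<exists>\<psi> \<in> hom H (twisted_ext G c). \<forall>h\<in>carrier H. fst (\<psi> h) = \<phi> h"
    then obtain \<psi> where psi: "\<psi> \<in> hom H (twisted_ext G c)" "\<forall>h\<in>carrier H. fst (\<psi> h) = \<phi> h"
      by blast
    show "cohomologous H (\<lambda>_ _. 1) (pullback2 \<phi> c)" unfolding cohomologous_def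
    proof (rule exI[of _ "\<lambda>x. 1 / snd (\<psi> x)"], intro conjI ballI)
      fix x assume "x \<in> carrier H"
      then show "1 / snd (\<psi> x) \<noteq> 0" using hom_in_carrier[OF psi(1)]
        by (force simp: twisted_ext_def)
    next
      fix x y assume xy: "x \<in> carrier H" "y \<in> carrier H"
      then have "x \<otimes>\<^bsub>H\<^esub> y \<in> carrier H" using assms(2) by (simp add: group.is_monoid monoid.m_closed)
      then have nz: "snd (\<psi> x) \<noteq> 0" "snd (\<psi> y) \<noteq> 0" "snd (\<psi> (x \<otimes>\<^bsub>H\<^esub> y)) \<noteq> 0"
        using xy hom_in_carrier[OF psi(1)] by (force simp: twisted_ext_def)+
      have m: "\<psi> (x \<otimes>\<^bsub>H\<^esub> y) = \<psi> x \<otimes>\<^bsub>twisted_ext G c\<^esub> \<psi> y"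
        using hom_mult[OF psi(1) xy] .
      have e: "snd (\<psi> (x \<otimes>\<^bsub>H\<^esub> y)) = snd (\<psi> x) * snd (\<psi> y) * c (\<phi> x) (\<phi> y)"
      proof -
        have px: "\<psi> x = (\<phi> x, snd (\<psi> x))" "\<psi> y = (\<phi> y, snd (\<psi> y))"
          using psi(2) xy by (metis prod.collapse)+
        show ?thesis using m by (subst (asm) px(1), subst (asm) px(2)) (simp add: twisted_ext_def)
      qed
      show "pullback2 \<phi> c x y = 1 * (1 / snd (\<psi> x)) * (1 / snd (\<psi> y)) / (1 / snd (\<psi> (x \<otimes>\<^bsub>H\<^esub> y)))"
        using e nz by (simp add: pullback2_def field_simps)
    qed
  qed
  show ?thesis
    using key lift assms(6) unfolding Am_def by auto
qed

end
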